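(* Let $k$ be a positive integer. For integers $0\le j\le k$ define the $q$-fibonomial coefficient $$\left\langle \begin{matrix} k \\ j \end{matrix} \right\rangle (x, s, q) = \frac{\prod_{i=1}^k f(i, x, s)}{\prod_{i=1}^j f(i, x, q^{j-i}s) \prod_{i=1}^{k-j} f(i, x, q^{j} s)}.$$ Then for all $n \in \mathbb{Z}$, $$\sum_{j=0}^{k+1} (-1)^{\binom{j+1}{2}} s^{\binom{j}{2}} q^{\frac{j(j-1)(2j-1)}{6}} \left\langle \begin{matrix} k+1 \\ j \end{matrix} \right\rangle (x, s, q)\, f(n-j, x, q^j s)^k = 0.$$
   Context: Let $x,s,q$ be indeterminates; all quantities live in the field of rational functions in $x,s,q$. The Carlitz $q$-Fibonacci polynomials $f(n,x,s)$ are defined by $f(0,x,s)=0$, $f(1,x,s)=1$ and $f(n, x, s) = x f(n-1, x, s) + q^{n-2} s f(n-2, x, s)$; this recurrence is required to hold for all $n\in\mathbb{Z}$, which uniquely extends $f(n,x,s)$ to negative $n$. Here $f(n,x,q^a s)$ means $f(n,x,s)$ with $s$ replaced by $q^a s$ (with the same $q$). *)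

theory Defs
  imports "HOL-Computational_Algebra.Polynomial" "HOL-Computational_Algebra.Fraction_Field"
begin

text \<open>Field of rational functions in x, s, q: the fraction field of Z[q][s][x],
  realised as int poly poly poly fract (outermost poly variable = q,
  middle = s, innermost = x).\<close>

type_synonym ratfun = "int poly poly poly fract"

definition Qv :: ratfun where "Qv = Fract [:0, 1:] 1"
definition Sv :: ratfun where "Sv = Fract [:[:0, 1:]:] 1"
definition Xv :: ratfun where "Xv = Fract [:[:[:0, 1:]:]:] 1"

fun cfib_nat :: "'a::field \<Rightarrow> 'a \<Rightarrow> 'a \<Rightarrow> nat \<Rightarrow> 'a" where
  "cfib_nat x s q 0 = 0"
| "cfib_nat x s q (Suc 0) = 1"
| "cfib_nat x s q (Suc (Suc m)) = x * cfib_nat x s q (Suc m) + q ^ m * s * cfib_nat x s q m"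

text \<open>Values at -m, obtained by running the recurrence
  f(n) = x f(n-1) + q^(n-2) s f(n-2) backwards:
  f(n-2) = (f(n) - x f(n-1)) / (q^(n-2) s).\<close>
fun cfib_neg :: "'a::field \<Rightarrow> 'a \<Rightarrow> 'a \<Rightarrow> nat \<Rightarrow> 'a" where
  "cfib_neg x s q 0 = 0"
| "cfib_neg x s q (Suc 0) = q / s"
| "cfib_neg x s q (Suc (Suc m)) = (cfib_neg x s q m - x * cfib_neg x s q (Suc m)) * q ^ (m + 2) / s"

definition cfib :: "int \<Rightarrow> 'a::field \<Rightarrow> 'a \<Rightarrow> 'a \<Rightarrow> 'a" where
  "cfib n x s q = (if 0 \<le> n then cfib_nat x s q (nat n) else cfib_neg x s q (nat (- n)))"

definition fibonomial :: "nat \<Rightarrow> nat \<Rightarrow> 'a::field \<Rightarrow> 'a \<Rightarrow> 'a \<Rightarrow> 'a" where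
  "fibonomial k j x s q =
     (\<Prod>i=1..k. cfib (int i) x s q) /
     ((\<Prod>i=1..j. cfib (int i) x (q ^ (j - i) * s) q) *
      (\<Prod>i=1..k - j. cfib (int i) x (q ^ j * s) q))"

end

theory Submission
  imports Defs
begin


lemma cfib_rec:
  fixes x s q :: "'a::field"
  assumes s: "s \<noteq> 0" and q: "q \<noteq> 0"
  shows "cfib n x s q = x * cfib (n-1) x s q + q powi (n-2) * s * cfib (n-2) x s q"
proof (cases "n \<ge> 2")
  case True
  then obtain m where m: "n = int m + 2" by (metis add.commute le_add_diff_inverse nonneg_int_cases zle_diff1_eq diff_ge_0_iff_ge)
  have "nat n = Suc (Suc m)" "nat (n-1) = Suc m" "nat (n-2) = m" using m by auto
  then show ?thesis using m by (simp add: cfib_def power_int_of_nat)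
next
  case False
  show ?thesis
  proof (cases "n = 1")
    case True
    then show ?thesis using s q by (simp add: cfib_def power_int_minus field_simps)
  next
    case False
    with \<open>\<not> n \<ge> 2\<close> have "n \<le> 0" by auto
    then obtain m where m: "n = - int m" by (metis minus_minus neg_0_le_iff_le nonneg_int_cases)
    have e1: "cfib n x s q = cfib_neg x s q m" using m by (simp add: cfib_def)
    have e2: "cfib (n-1) x s q = cfib_neg x s q (Suc m)" using m by (simp add: cfib_def nat_add_distrib)
    have e3: "cfib (n-2) x s q = cfib_neg x s q (Suc (Suc m))" using m by (simp add: cfib_def nat_add_distrib)
    have pw: "q powi (n-2) * q ^ (m+2) = 1" using m q
      by (simp add: power_int_minus power_int_of_nat[symmetric] power_int_add[symmetric] )
    have "q powi (n-2) * s * ((cfib_neg x s q m - x * cfib_neg x s q (Suc m)) * q ^ (m + 2) / s)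
        = (cfib_neg x s q m - x * cfib_neg x s q (Suc m)) * (q powi (n-2) * q ^ (m + 2))"
      using s by (simp add: field_simps)
    then show ?thesis unfolding e1 e2 e3 using pw by simp
  qed
qed

lemma rec_unique:
  fixes y c :: "int \<Rightarrow> 'a::field"
  assumes r: "\<And>n. y n = x * y (n-1) + c n * y (n-2)" and c: "\<And>n. c n \<noteq> 0"
    and a0: "y a = 0" and a1: "y (a+1) = 0"
  shows "y n = 0"
proof -
  have f: "y (a + int m) = 0 \<and> y (a + int m + 1) = 0" for m
  proof (induction m)
    case 0 then show ?case using a0 a1 by simp
  next
    case (Suc m)
    have "y (a + int m + 2) = x * y (a + int m + 1) + c (a + int m + 2) * y (a + int m)"
      using r[of "a + int m + 2"] by (simp add: algebra_simps)
    with Suc show ?case by (simp add: algebra_simps)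
  qed
  have b: "y (a - int m) = 0 \<and> y (a - int m + 1) = 0" for m
  proof (induction m)
    case 0 then show ?case using a0 a1 by simp
  next
    case (Suc m)
    have "y (a - int m + 1) = x * y (a - int m) + c (a - int m + 1) * y (a - int m - 1)"
      using r[of "a - int m + 1"] by (simp add: algebra_simps)
    then have "c (a - int m + 1) * y (a - int m - 1) = 0" using Suc.IH by simp
    with c have "y (a - int m - 1) = 0" by simp
    with Suc show ?case by (simp add: algebra_simps)
  qed
  show ?thesis
  proof (cases "n \<ge> a")
    case True
    then have "n = a + int (nat (n - a))" by simp
    then show ?thesis using f by metis
  next
    case False
    then have "n = a - int (nat (a - n))" by simp
    then show ?thesis using b by metis
  qed
qed

definition G :: "'a \<Rightarrow> 'a \<Rightarrow> 'a \<Rightarrow> nat \<Rightarrow> int \<Rightarrow> 'a::field" where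
  "G x s q j n = cfib (n - int j) x (q^j * s) q"

lemma Grec:
  fixes x s q :: "'a::field"
  assumes s: "s \<noteq> 0" and q: "q \<noteq> 0"
  shows "G x s q j n = x * G x s q j (n-1) + q powi (n-2) * s * G x s q j (n-2)"
proof -
  have "q powi (n - int j - 2) * (q ^ j * s) = q powi (n-2) * s"
  proof -
    have h: "q powi (n - int j - 2) * q powi (int j) = q powi (n-2)"
      using q power_int_add[of q "n - int j - 2" "int j"] by simp
    have "q powi (n - int j - 2) * q ^ j = q powi (n-2)"
      using h by (simp add: power_int_of_nat)
    then show ?thesis by (simp add: mult.assoc[symmetric])
  qed
  moreover have "q ^ j * s \<noteq> 0" using s q by simp
  ultimately show ?thesis
    unfolding G_def using cfib_rec[of "q^j*s" q "n - int j" x] q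
    by (simp add: algebra_simps)
qed

definition W :: "'a \<Rightarrow> 'a \<Rightarrow> 'a \<Rightarrow> nat \<Rightarrow> 'a::field" where
  "W x s q j = G x s q 1 (int j) * G x s q 0 (int j + 1) - G x s q 0 (int j) * G x s q 1 (int j + 1)"

lemma B1:
  fixes x s q :: "'a::field"
  assumes s: "s \<noteq> 0" and q: "q \<noteq> 0"
  shows "W x s q j * G x s q j n = G x s q 1 (int j) * G x s q 0 n - G x s q 0 (int j) * G x s q 1 n"
proof -
  define y where "y n = W x s q j * G x s q j n - (G x s q 1 (int j) * G x s q 0 n - G x s q 0 (int j) * G x s q 1 n)" for n
  have "y n = 0"
  proof (rule rec_unique[where c = "\<lambda>n. q powi (n-2) * s" and x = x and a = "int j"])
    fix n
    show "y n = x * y (n - 1) + q powi (n - 2) * s * y (n - 2)"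
      unfolding y_def
      apply (subst Grec[OF s q, of x j n], subst Grec[OF s q, of x 0 n], subst Grec[OF s q, of x 1 n])
      by (simp add: algebra_simps)
  next
    fix n show "q powi (n - 2) * s \<noteq> 0" using s q by simp
  next
    show "y (int j) = 0" unfolding y_def by (simp add: G_def cfib_def)
  next
    show "y (int j + 1) = 0" unfolding y_def by (simp add: G_def cfib_def W_def)
  qed
  then show ?thesis unfolding y_def by simp
qed

lemma W0:
  fixes x s q :: "'a::field"
  assumes s: "s \<noteq> 0" and q: "q \<noteq> 0"
  shows "W x s q 0 = 1 / s"
  using s q by (simp add: W_def G_def cfib_def)

lemma WSuc:
  fixes x s q :: "'a::field"
  assumes s: "s \<noteq> 0" and q: "q \<noteq> 0"
  shows "W x s q (Suc j) = (- (q ^ j)) * s * W x s q j"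
proof -
  have a: "G x s q i (2 + int j) = x * G x s q i (1 + int j) + q ^ j * s * G x s q i (int j)" for i
    using Grec[OF s q, of x i "int j + 2"] by (simp add: power_int_of_nat add.commute)
  show ?thesis unfolding W_def using a[of 0] a[of 1]
    by (simp add: algebra_simps add.assoc)
qed

lemma W_nz:
  fixes x s q :: "'a::field"
  assumes s: "s \<noteq> 0" and q: "q \<noteq> 0"
  shows "W x s q j \<noteq> 0"
  by (induction j) (simp_all add: s q W0[OF s q] WSuc[OF s q])



lemma lag:
  fixes a b :: "nat \<Rightarrow> 'a::field"
  assumes "\<And>i j. i < Suc (Suc n) \<Longrightarrow> j < Suc (Suc n) \<Longrightarrow> i \<noteq> j \<Longrightarrow> a j * b i - b j * a i \<noteq> 0"
  shows "(\<Sum>j<Suc (Suc n). (a j * Y - b j * X)^n / (\<Prod>i\<in>{..<Suc (Suc n)}-{j}. a j * b i - b j * a i)) = 0"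
  using assms
proof (induction n arbitrary: a b)
  case 0
  have "{..<Suc (Suc 0)} - {0} = {1}" "{..<Suc (Suc 0)} - {1} = {0}" by auto
  moreover have "a (Suc 0) * b 0 - b (Suc 0) * a 0 = - (a 0 * b (Suc 0) - b 0 * a (Suc 0))" by simp
  ultimately show ?case by (simp add: lessThan_Suc del: minus_diff_eq)
next
  case (Suc n)
  define M where "M = Suc (Suc n)"
  define d where "d j i = a j * b i - b j * a i" for j i
  define L where "L j = a j * Y - b j * X" for j
  have dnz: "\<And>i j. i < Suc M \<Longrightarrow> j < Suc M \<Longrightarrow> i \<noteq> j \<Longrightarrow> d j i \<noteq> 0"
    using Suc.prems unfolding d_def M_def by blast
  define P where "P j = (\<Prod>i\<in>{..<Suc M}-{j}. d j i)" for j
  have goal_eq: "?case \<longleftrightarrow> (\<Sum>j<Suc M. L j ^ Suc n / P j) = 0"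
    unfolding L_def P_def d_def M_def by simp
  have D: "d 0 M \<noteq> 0" using dnz[of M 0] unfolding M_def by simp
  have pl: "L j * d 0 M = d j M * L 0 + d 0 j * L M" for j
    unfolding L_def d_def by (simp add: algebra_simps)
  have split: "(\<Sum>j<Suc M. L j ^ Suc n / P j) * d 0 M
     = L 0 * (\<Sum>j<Suc M. L j ^ n * d j M / P j) + L M * (\<Sum>j<Suc M. L j ^ n * d 0 j / P j)"
  proof -
    have "(\<Sum>j<Suc M. L j ^ Suc n / P j) * d 0 M = (\<Sum>j<Suc M. L j ^ n * (L j * d 0 M) / P j)"
      unfolding sum_distrib_right by (intro sum.cong refl) (simp add: mult_ac)
    also have "\<dots> = (\<Sum>j<Suc M. L 0 * (L j ^ n * d j M / P j) + L M * (L j ^ n * d 0 j / P j))"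
      by (rule sum.cong) (simp_all add: pl algebra_simps add_divide_distrib)
    finally show ?thesis by (simp only: sum.distrib sum_distrib_left)
  qed
  have s1: "(\<Sum>j<Suc M. L j ^ n * d j M / P j) = 0"
  proof -
    have "(\<Sum>j<Suc M. L j ^ n * d j M / P j) = (\<Sum>j<M. L j ^ n * d j M / P j)"
      by (simp add: d_def)
    also have "\<dots> = (\<Sum>j<M. L j ^ n / (\<Prod>i\<in>{..<M}-{j}. d j i))"
    proof (rule sum.cong)
      fix j assume j: "j \<in> {..<M}"
      have "{..<Suc M}-{j} = insert M ({..<M}-{j})" using j by auto
      then have "P j = d j M * (\<Prod>i\<in>{..<M}-{j}. d j i)" unfolding P_def by simp
      moreover have "d j M \<noteq> 0" using dnz[of M j] j by simp
      ultimately show "L j ^ n * d j M / P j = L j ^ n / (\<Prod>i\<in>{..<M}-{j}. d j i)" by simp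
    qed simp
    also have "\<dots> = 0"
      using Suc.IH[of a b] Suc.prems unfolding L_def d_def M_def by simp
    finally show ?thesis .
  qed
  have s2: "(\<Sum>j<Suc M. L j ^ n * d 0 j / P j) = 0"
  proof -
    have "(\<Sum>j<Suc M. L j ^ n * d 0 j / P j) = (\<Sum>j<M. L (Suc j) ^ n * d 0 (Suc j) / P (Suc j))"
      by (subst sum.lessThan_Suc_shift) (simp add: d_def)
    also have "\<dots> = (\<Sum>j<M. - (L (Suc j) ^ n / (\<Prod>i\<in>{..<M}-{j}. d (Suc j) (Suc i))))"
    proof (rule sum.cong)
      fix j assume j: "j \<in> {..<M}"
      have "{..<Suc M}-{Suc j} = insert 0 (Suc ` ({..<M}-{j}))" using j
      proof (intro equalityI subsetI)
        fix i assume i: "i \<in> {..<Suc M}-{Suc j}"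
        show "i \<in> insert 0 (Suc ` ({..<M}-{j}))"
        proof (cases i)
          case (Suc i') then show ?thesis using i by auto
        qed simp
      qed auto
      then have "P (Suc j) = d (Suc j) 0 * (\<Prod>i\<in>{..<M}-{j}. d (Suc j) (Suc i))" unfolding P_def
        by (simp add: prod.reindex)
      moreover have "d (Suc j) 0 \<noteq> 0" using dnz[of 0 "Suc j"] j by simp
      moreover have "d 0 (Suc j) = - d (Suc j) 0" unfolding d_def by simp
      ultimately show "L (Suc j) ^ n * d 0 (Suc j) / P (Suc j) = - (L (Suc j) ^ n / (\<Prod>i\<in>{..<M}-{j}. d (Suc j) (Suc i)))"
        by simp
    qed simp
    also have "\<dots> = - (\<Sum>j<M. L (Suc j) ^ n / (\<Prod>i\<in>{..<M}-{j}. d (Suc j) (Suc i)))"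
      by (simp add: sum_negf)
    also have "\<dots> = 0"
      using Suc.IH[of "\<lambda>i. a (Suc i)" "\<lambda>i. b (Suc i)"] Suc.prems unfolding L_def d_def M_def by simp
    finally show ?thesis .
  qed
  have "(\<Sum>j<Suc M. L j ^ Suc n / P j) * d 0 M = 0" using split s1 s2 by simp
  with D have "(\<Sum>j<Suc M. L j ^ Suc n / P j) = 0" by simp
  with goal_eq show ?case by simp
qed



lemma sqsum: "(j::nat) * (j - 1) * (2 * j - 1) = 6 * (\<Sum>i<j. i^2)"
proof (induction j)
  case 0 then show ?case by simp
next
  case (Suc j)
  show ?case
  proof (cases j)
    case 0 then show ?thesis by simp
  next
    case (Suc m)
    have "Suc j * j * (2 * Suc j - 1) = j * (j - 1) * (2 * j - 1) + 6 * j^2"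
      unfolding Suc by (simp add: algebra_simps power2_eq_square)
    then show ?thesis using Suc.IH by simp
  qed
qed

lemma eSuc: "Suc (j::nat) * (Suc j - 1) * (2 * Suc j - 1) div 6 = j * (j - 1) * (2 * j - 1) div 6 + j^2"
  unfolding sqsum by simp

lemma ch2: "Suc j choose 2 = (j choose 2) + j"
  by (simp add: numeral_2_eq_2)

definition R :: "'a \<Rightarrow> 'a \<Rightarrow> 'a \<Rightarrow> nat \<Rightarrow> 'a::field" where
  "R x s q j = (-1) ^ (((j + 1) choose 2) + j) * s ^ (j choose 2) * q ^ (j * (j - 1) * (2 * j - 1) div 6)
     * (\<Prod>i<j. W x s q i)"

lemma Rlem:
  fixes x s q :: "'a::field"
  assumes s: "s \<noteq> 0" and q: "q \<noteq> 0"
  shows "R x s q j * s * W x s q j = W x s q j ^ j"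
proof (induction j)
  case 0 then show ?case using s q by (simp add: R_def W0 numeral_2_eq_2)
next
  case (Suc j)
  have r: "R x s q (Suc j) = R x s q j * ((-1) ^ j * s ^ j * q ^ (j^2) * W x s q j)"
  proof -
    have e1: "((Suc j + 1) choose 2) + Suc j = (((j + 1) choose 2) + j) + j + 2"
      using ch2[of "Suc j"] by simp
    have e2: "(-1::'a) ^ ((((j + 1) choose 2) + j) + j + 2) = (-1) ^ (((j + 1) choose 2) + j) * (-1) ^ j"
      by (simp add: power_add)
    show ?thesis
      unfolding R_def eSuc e1 e2 ch2 by (simp add: power_add algebra_simps)
  qed
  have "R x s q (Suc j) * s * W x s q (Suc j) = (R x s q j * s * W x s q j) * ((-1) ^ j * s ^ j * q ^ (j^2)) * W x s q (Suc j)"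
    unfolding r by (simp add: algebra_simps)
  also have "\<dots> = ((- (q ^ j)) * s * W x s q j) ^ j * W x s q (Suc j)"
  proof -
    have a: "((- (q ^ j)) * s * W x s q j) ^ j = (-1)^j * (q^j)^j * s^j * W x s q j ^ j"
      by (simp only: power_mult_distrib power_minus[of "q^j"])
    have b: "q ^ (j^2) = (q^j)^j" by (simp add: power2_eq_square power_mult)
    show ?thesis unfolding Suc.IH a b by (simp add: algebra_simps)
  qed
  also have "\<dots> = W x s q (Suc j) ^ Suc j"
    using WSuc[OF s q] by simp
  finally show ?case .
qed

lemma key:
  fixes x s q :: "'a::field"
  assumes s: "s \<noteq> 0" and q: "q \<noteq> 0" and j: "j \<le> k + 1"
  shows "R x s q j * W x s q j ^ (k + 1 - j) * s = W x s q j ^ k"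
proof (cases j)
  case 0 then show ?thesis using s q by (simp add: R_def W0 numeral_2_eq_2)
next
  case (Suc i)
  have Wn: "W x s q j \<noteq> 0" using W_nz[OF s q] .
  have "R x s q j * s * W x s q j = W x s q j ^ i * W x s q j"
    using Rlem[OF s q, of x j] Suc by (simp add: algebra_simps)
  then have "R x s q j * s = W x s q j ^ i" using Wn by simp
  moreover have "i + (k + 1 - j) = k" using Suc j by simp
  ultimately show ?thesis
    by (metis (no_types) mult.assoc mult.commute power_add)
qed



theorem main_gen:
  fixes x s q :: "'a::field" and k :: nat and n :: int
  assumes s: "s \<noteq> 0" and q: "q \<noteq> 0"
    and nz: "\<And>i t. 1 \<le> t \<Longrightarrow> cfib_nat x (q^i*s) q t \<noteq> 0"
  shows "(\<Sum>j=0..k+1. (-1) ^ ((j + 1) choose 2) * s ^ (j choose 2)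
            * q ^ (j * (j - 1) * (2 * j - 1) div 6)
            * fibonomial (k + 1) j x s q
            * cfib (n - int j) x (q ^ j * s) q ^ k) = 0"
proof -
  have cnz: "cfib (int t) x (q^i*s) q \<noteq> 0" if "1 \<le> t" for t i
    using nz[OF that] by (simp add: cfib_def)
  have Gpos: "G x s q i (int j) = cfib (int (j - i)) x (q^i*s) q" if "i \<le> j" for i j
    using that by (simp add: G_def of_nat_diff)
  have Gnz: "G x s q i (int j) \<noteq> 0" if "i < j" for i j
    using that Gpos[of i j] cnz[of "j - i" i] by simp
  define a where "a j = G x s q 1 (int j)" for j
  define b where "b j = G x s q 0 (int j)" for j
  have dform: "a j * b i - b j * a i = W x s q j * G x s q j (int i)" for i j
    unfolding a_def b_def using B1[OF s q, of x j "int i"] by simp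
  have Wnz: "W x s q j \<noteq> 0" for j using W_nz[OF s q] .
  have dnz: "a j * b i - b j * a i \<noteq> 0" if "i \<noteq> j" for i j
  proof (cases "j < i")
    case True then show ?thesis unfolding dform using Wnz Gnz by simp
  next
    case False
    then have "i < j" using that by simp
    have "a j * b i - b j * a i = - (a i * b j - b i * a j)" by (simp add: algebra_simps)
    then show ?thesis unfolding dform using Wnz Gnz[OF \<open>i < j\<close>] by simp
  qed
  define N where "N = (\<Prod>i=1..k+1. cfib (int i) x s q)"
  define Den where "Den j = (\<Prod>i=1..j. cfib (int i) x (q ^ (j - i) * s) q) *
      (\<Prod>i=1..k + 1 - j. cfib (int i) x (q ^ j * s) q)" for j
  have fib: "fibonomial (k + 1) j x s q = N / Den j" for j
    unfolding fibonomial_def N_def Den_def by simp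
  have Dennz: "Den j \<noteq> 0" for j
    unfolding Den_def using cnz by (auto simp: prod_zero_iff)
  have h0: "cfib (int t) x s q \<noteq> 0" if "1 \<le> t" for t using cnz[OF that, of 0] by simp
  have Nnz: "N \<noteq> 0" unfolding N_def
    by (metis (no_types, lifting) finite_atLeastAtMost prod_zero_iff h0 atLeastAtMost_iff)
  define P where "P j = (\<Prod>i\<in>{..<Suc (Suc k)}-{j}. a j * b i - b j * a i)" for j
  have PF: "P j = ((-1)^j * (\<Prod>i<j. W x s q i) * W x s q j ^ (k + 1 - j)) * Den j" if j: "j \<le> k + 1" for j
  proof -
    have split: "{..<Suc (Suc k)}-{j} = {..<j} \<union> {Suc j..Suc k}" using j by auto
    have p1: "(\<Prod>i<j. a j * b i - b j * a i) = (-1)^j * (\<Prod>i<j. W x s q i) * (\<Prod>i<j. G x s q i (int j))"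
    proof -
      have "(\<Prod>i<j. a j * b i - b j * a i) = (\<Prod>i<j. (-1) * (W x s q i * G x s q i (int j)))"
      proof (rule prod.cong)
        fix i assume "i \<in> {..<j}"
        have "a j * b i - b j * a i = - (a i * b j - b i * a j)" by (simp add: algebra_simps)
        then show "a j * b i - b j * a i = (-1) * (W x s q i * G x s q i (int j))" unfolding dform by simp
      qed simp
      also have "\<dots> = (-1)^j * (\<Prod>i<j. W x s q i) * (\<Prod>i<j. G x s q i (int j))"
        unfolding prod.distrib prod_constant card_lessThan by (simp only: mult.assoc)
      finally show ?thesis .
    qed
    have p1': "(\<Prod>i<j. G x s q i (int j)) = (\<Prod>t=1..j. cfib (int t) x (q ^ (j - t) * s) q)"
    proof (rule prod.reindex_bij_witness[of _ "\<lambda>t. j - t" "\<lambda>i. j - i"])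
      fix i assume "i \<in> {..<j}"
      then show "j - (j - i) = i" "j - i \<in> {1..j}" by auto
      show "cfib (int (j - i)) x (q ^ (j - (j - i)) * s) q = G x s q i (int j)"
        using Gpos[of i j] \<open>i \<in> {..<j}\<close> by simp
    next
      fix t assume "t \<in> {1..j}"
      then show "j - (j - t) = t" "j - t \<in> {..<j}" by auto
    qed
    have p2: "(\<Prod>i\<in>{Suc j..Suc k}. a j * b i - b j * a i) = W x s q j ^ (k + 1 - j) * (\<Prod>i\<in>{Suc j..Suc k}. G x s q j (int i))"
      unfolding dform by (simp add: prod.distrib)
    have p2': "(\<Prod>i\<in>{Suc j..Suc k}. G x s q j (int i)) = (\<Prod>t=1..k + 1 - j. cfib (int t) x (q ^ j * s) q)"
    proof (rule prod.reindex_bij_witness[of _ "\<lambda>t. t + j" "\<lambda>i. i - j"])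
      fix i assume i: "i \<in> {Suc j..Suc k}"
      then show "i - j + j = i" "i - j \<in> {1..k + 1 - j}" by auto
      show "cfib (int (i - j)) x (q ^ j * s) q = G x s q j (int i)"
        using Gpos[of j i] i by simp
    next
      fix t assume "t \<in> {1..k + 1 - j}"
      then show "t + j - j = t" "t + j \<in> {Suc j..Suc k}" by auto
    qed
    have "P j = (\<Prod>i<j. a j * b i - b j * a i) * (\<Prod>i\<in>{Suc j..Suc k}. a j * b i - b j * a i)"
      unfolding P_def split by (rule prod.union_disjoint) auto
    then show ?thesis unfolding p1 p2 p1' p2' Den_def by (simp add: algebra_simps)
  qed
  define L where "L j = a j * G x s q 0 n - b j * G x s q 1 n" for j
  have LF: "L j = W x s q j * G x s q j n" for j
    unfolding L_def a_def b_def using B1[OF s q, of x j n] by simp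
  have tm: "(-1) ^ ((j + 1) choose 2) * s ^ (j choose 2)
            * q ^ (j * (j - 1) * (2 * j - 1) div 6)
            * fibonomial (k + 1) j x s q
            * cfib (n - int j) x (q ^ j * s) q ^ k = (N / s) * (L j ^ k / P j)" if j: "j \<le> k + 1" for j
  proof -
    define T where "T = (-1) ^ ((j + 1) choose 2) * s ^ (j choose 2) * q ^ (j * (j - 1) * (2 * j - 1) div 6)"
    define A where "A = (-1)^j * (\<Prod>i<j. W x s q i) * W x s q j ^ (k + 1 - j)"
    have Anz: "A \<noteq> 0" unfolding A_def using Wnz by (simp add: prod_zero_iff)
    have "R x s q j = T * ((-1)^j * (\<Prod>i<j. W x s q i))"
      unfolding R_def T_def by (simp add: power_add algebra_simps)
    then have TA: "T * A * s = W x s q j ^ k"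
      using key[OF s q j, of x] unfolding A_def by (simp add: algebra_simps)
    have g: "cfib (n - int j) x (q ^ j * s) q = G x s q j n" by (simp add: G_def)
    have "(N / s) * (L j ^ k / P j) = (N / s) * ((T * A * s) * G x s q j n ^ k / (A * Den j))"
    proof -
      have "L j ^ k = (T * A * s) * G x s q j n ^ k" unfolding LF TA by (simp add: power_mult_distrib)
      moreover have "P j = A * Den j" unfolding PF[OF j] A_def by simp
      ultimately show ?thesis by simp
    qed
    also have "\<dots> = T * (N / Den j) * G x s q j n ^ k"
      using Anz Dennz[of j] s by (simp add: field_simps)
    finally show ?thesis unfolding fib g T_def by simp
  qed
  have "(\<Sum>j=0..k+1. (-1) ^ ((j + 1) choose 2) * s ^ (j choose 2)
            * q ^ (j * (j - 1) * (2 * j - 1) div 6)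
            * fibonomial (k + 1) j x s q
            * cfib (n - int j) x (q ^ j * s) q ^ k) = (\<Sum>j<Suc (Suc k). (N / s) * (L j ^ k / P j))"
  proof -
    have "{0..k+1} = {..<Suc (Suc k)}" by auto
    then show ?thesis using tm by (intro sum.cong) auto
  qed
  also have "\<dots> = (N / s) * (\<Sum>j<Suc (Suc k). L j ^ k / P j)" by (rule sum_distrib_left[symmetric])
  also have "(\<Sum>j<Suc (Suc k). L j ^ k / P j) = 0"
    unfolding L_def P_def
    by (rule lag) (use dnz in auto)
  finally show ?thesis by simp
qed



fun cfp :: "'a::comm_ring_1 \<Rightarrow> 'a \<Rightarrow> 'a \<Rightarrow> nat \<Rightarrow> 'a" where
  "cfp x s q 0 = 0"
| "cfp x s q (Suc 0) = 1"
| "cfp x s q (Suc (Suc m)) = x * cfp x s q (Suc m) + q ^ m * s * cfp x s q m"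

lemma cfib_nat_cfp: "cfib_nat x s q t = cfp x s q t"
  by (induction x s q t rule: cfp.induct) simp_all

lemma cfp_hom:
  fixes h :: "'a::comm_ring_1 \<Rightarrow> 'b::comm_ring_1"
  assumes ha: "\<And>a b. h (a + b) = h a + h b" and hm: "\<And>a b. h (a * b) = h a * h b"
    and h0: "h 0 = 0" and h1: "h 1 = 1"
  shows "h (cfp x s q t) = cfp (h x) (h s) (h q) t"
proof -
  have hp: "h (a ^ m) = h a ^ m" for a m by (induction m) (simp_all add: h1 hm)
  show ?thesis by (induction x s q t rule: cfp.induct) (simp_all add: h0 h1 ha hm hp)
qed

lemma cfp_pos: "cfp (1::int) 1 1 t \<ge> (if t = 0 then 0 else 1)"
  by (induction "1::int" "1::int" "1::int" t rule: cfp.induct) (auto split: if_splits)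

definition ev :: "int poly poly poly \<Rightarrow> int" where
  "ev p = poly (poly (poly p [:[:1:]:]) [:1:]) 1"

lemma ratfun_nz:
  assumes "1 \<le> t"
  shows "cfib_nat Xv (Qv ^ i * Sv) Qv t \<noteq> 0"
proof -
  define X :: "int poly poly poly" where "X = [:[:[:0, 1:]:]:]"
  define S :: "int poly poly poly" where "S = [:[:0, 1:]:]"
  define Q :: "int poly poly poly" where "Q = [:0, 1:]"
  define h :: "int poly poly poly \<Rightarrow> ratfun" where "h p = Fract p 1" for p
  have ha: "h (a + b) = h a + h b" for a b unfolding h_def by simp
  have hm: "h (a * b) = h a * h b" for a b unfolding h_def by simp
  have h0: "h 0 = 0" unfolding h_def by (simp add: Zero_fract_def)
  have h1: "h 1 = 1" unfolding h_def by (simp add: One_fract_def)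
  have hp: "h (a ^ m) = h a ^ m" for a m by (induction m) (simp_all add: h1 hm)
  have e: "Xv = h X" "Sv = h S" "Qv = h Q"
    unfolding Xv_def Qv_def Sv_def h_def X_def S_def Q_def by simp_all
  have c: "cfib_nat Xv (Qv ^ i * Sv) Qv t = h (cfp X (Q ^ i * S) Q t)"
    unfolding cfib_nat_cfp e cfp_hom[OF ha hm h0 h1] hm hp ..
  have ea: "ev (a + b) = ev a + ev b" for a b unfolding ev_def by simp
  have em: "ev (a * b) = ev a * ev b" for a b unfolding ev_def by simp
  have e0: "ev 0 = 0" unfolding ev_def by simp
  have e1: "ev 1 = 1" unfolding ev_def by simp
  have ep: "ev (a ^ m) = ev a ^ m" for a m by (induction m) (simp_all add: e1 em)
  have "ev (cfp X (Q ^ i * S) Q t) = cfp (ev X) (ev (Q ^ i * S)) (ev Q) t"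
    by (rule cfp_hom[OF ea em e0 e1])
  also have "\<dots> = cfp 1 1 1 t" unfolding em ep by (simp add: ev_def X_def S_def Q_def)
  finally have "ev (cfp X (Q ^ i * S) Q t) \<ge> 1" using cfp_pos[of t] assms by simp
  then have "cfp X (Q ^ i * S) Q t \<noteq> 0" using e0 by auto
  then show ?thesis unfolding c h_def by (simp add: Zero_fract_def eq_fract)
qed

lemma Sv_nz: "Sv \<noteq> 0" by (simp add: Sv_def Zero_fract_def eq_fract)
lemma Qv_nz: "Qv \<noteq> 0" by (simp add: Qv_def Zero_fract_def eq_fract)

theorem theorem1:
  fixes k :: nat and n :: int
  assumes "1 \<le> k"
  shows "(\<Sum>j=0..k+1. (-1) ^ ((j + 1) choose 2) * Sv ^ (j choose 2)
            * Qv ^ (j * (j - 1) * (2 * j - 1) div 6)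
            * fibonomial (k + 1) j Xv Sv Qv
            * cfib (n - int j) Xv (Qv ^ j * Sv) Qv ^ k) = 0"
  by (rule main_gen[OF Sv_nz Qv_nz ratfun_nz])


end
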